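(* Let $c_1,c_2\ge 2$ be integers, let $d$ be prime, and let $f:\mathbb{Z}_{c_1}\times\mathbb{Z}_{c_2}\to\mathbb{Z}_d$ be a function that cannot be written as $f(s_1,s_2)=g_1(s_1)+g_2(s_2)$ (mod $d$) for any functions $g_1:\mathbb{Z}_{c_1}\to\mathbb{Z}_d$, $g_2:\mathbb{Z}_{c_2}\to\mathbb{Z}_d$. Then the only non-signaling distribution $p(m_1,m_2|s_1,s_2)$ on $\mathbb{Z}_d^2$ satisfying $p(m_1+m_2\equiv f(s_1,s_2)\,|\,s_1,s_2)=1$ for all $(s_1,s_2)$ is $$p(m_1,m_2|s_1,s_2)=\begin{cases}d^{-1}&\text{if } m_1+m_2\equiv f(s_1,s_2)\pmod d,\\0&\text{otherwise.}\end{cases}$$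
   Context: A bipartite conditional distribution $p(m_1,m_2|s_1,s_2)$ with $m_1,m_2\in\mathbb{Z}_d$ and $s_j\in\mathbb{Z}_{c_j}$ is non-signaling if the marginal $\sum_{m_2}p(m_1,m_2|s_1,s_2)$ does not depend on $s_2$ and the marginal $\sum_{m_1}p(m_1,m_2|s_1,s_2)$ does not depend on $s_1$. *)

theory Defs
  imports "HOL-Analysis.Analysis" "HOL-Computational_Algebra.Primes"
begin

text \<open>Z_n is represented by the natural numbers {0..<n}. A bipartite conditional
distribution p(m1,m2|s1,s2) is a real function p m1 m2 s1 s2.\<close>

definition cond_distr :: "nat \<Rightarrow> nat \<Rightarrow> nat \<Rightarrow> (nat \<Rightarrow> nat \<Rightarrow> nat \<Rightarrow> nat \<Rightarrow> real) \<Rightarrow> bool" where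
  "cond_distr d c1 c2 p \<longleftrightarrow>
     (\<forall>s1<c1. \<forall>s2<c2.
        (\<forall>m1<d. \<forall>m2<d. p m1 m2 s1 s2 \<ge> 0) \<and>
        (\<Sum>m1<d. \<Sum>m2<d. p m1 m2 s1 s2) = 1)"

definition non_signaling :: "nat \<Rightarrow> nat \<Rightarrow> nat \<Rightarrow> (nat \<Rightarrow> nat \<Rightarrow> nat \<Rightarrow> nat \<Rightarrow> real) \<Rightarrow> bool" where
  "non_signaling d c1 c2 p \<longleftrightarrow>
     cond_distr d c1 c2 p \<and>
     (\<forall>m1<d. \<forall>s1<c1. \<forall>s2<c2. \<forall>s2'<c2.
        (\<Sum>m2<d. p m1 m2 s1 s2) = (\<Sum>m2<d. p m1 m2 s1 s2')) \<and>
     (\<forall>m2<d. \<forall>s2<c2. \<forall>s1<c1. \<forall>s1'<c1.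
        (\<Sum>m1<d. p m1 m2 s1 s2) = (\<Sum>m1<d. p m1 m2 s1' s2))"

end

theory Submission
  imports Defs "HOL-Number_Theory.Cong"
begin

lemma uniq:
  fixes m1 m2 f d :: nat
  assumes "m1 < d" "m2 < d" "f < d"
  shows "(m1 + m2) mod d = f \<longleftrightarrow> m2 = (f + d - m1) mod d"
proof
  assume h: "(m1 + m2) mod d = f"
  have "(m1 + (f + d - m1) mod d) mod d = (m1 + (f + d - m1)) mod d" by (simp add: mod_add_right_eq)
  also have "\<dots> = (f + d) mod d" using assms by simp
  also have "\<dots> = f" using assms by simp
  finally have "[m1 + m2 = m1 + (f + d - m1) mod d] (mod d)" using h by (simp add: cong_def)
  hence "[m2 = (f + d - m1) mod d] (mod d)" by (simp add: cong_add_lcancel_nat)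
  moreover have "(f + d - m1) mod d < d" using assms by simp
  ultimately show "m2 = (f + d - m1) mod d" using cong_less_modulus_unique_nat assms(2) by blast
next
  assume "m2 = (f + d - m1) mod d"
  hence "(m1 + m2) mod d = (m1 + (f + d - m1)) mod d" by (simp add: mod_add_right_eq)
  also have "\<dots> = (f + d) mod d" using assms by simp
  also have "\<dots> = f" using assms by simp
  finally show "(m1 + m2) mod d = f" .
qed

lemma shiftidx:
  fixes f d :: nat and x :: int
  assumes "f < d"
  shows "nat ((int f - x) mod int d) = (f + d - nat (x mod int d)) mod d"
proof -
  have d: "d > 0" using assms by simp
  have lt: "nat (x mod int d) < d" using d by (simp add: nat_less_iff)
  have "int ((f + d - nat (x mod int d)) mod d) = (int f + int d - (x mod int d)) mod int d"
    using lt d by (simp add: of_nat_mod of_nat_diff)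
  also have "\<dots> = (int f - x) mod int d"
    by (metis add.commute add_diff_eq mod_add_self2 mod_diff_right_eq)
  finally show ?thesis by (metis nat_int)
qed

lemma periodic_const:
  fixes a :: "int \<Rightarrow> real" and d \<delta> :: int
  assumes dpos: "d > 0" and md: "\<And>x. a x = a (x mod d)" and sh: "\<And>z. a z = a (z + \<delta>)"
    and cop: "coprime \<delta> d"
  shows "a x = a 0"
proof -
  have n: "a z = a (z + int n * \<delta>)" for z n
  proof (induction n arbitrary: z)
    case 0 then show ?case by simp
  next
    case (Suc n)
    have "a z = a (z + \<delta>)" by (rule sh)
    also have "\<dots> = a (z + \<delta> + int n * \<delta>)" by (rule Suc)
    finally show ?case by (simp add: algebra_simps)
  qed
  obtain k where k: "[\<delta> * k = 1] (mod d)" using cong_solve_coprime_int[OF cop] by blast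
  define m where "m = (x * k) mod d"
  have m0: "m \<ge> 0" using dpos m_def by simp
  have "(m * \<delta>) mod d = (x * (\<delta> * k)) mod d"
    unfolding m_def by (metis mod_mult_left_eq mult.commute mult.left_commute)
  also have "\<dots> = (x * 1) mod d" using k unfolding cong_def by (metis mod_mult_right_eq)
  finally have e: "(m * \<delta>) mod d = x mod d" by simp
  have "a 0 = a (0 + int (nat m) * \<delta>)" by (rule n)
  also have "\<dots> = a (m * \<delta>)" using m0 by simp
  also have "\<dots> = a ((m * \<delta>) mod d)" by (rule md)
  also have "\<dots> = a x" using e md by simp
  finally show ?thesis by simp
qed
theorem lemma1:
  fixes c1 c2 d :: nat
    and f :: "nat \<Rightarrow> nat \<Rightarrow> nat"
    and p :: "nat \<Rightarrow> nat \<Rightarrow> nat \<Rightarrow> nat \<Rightarrow> real"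
  assumes "c1 \<ge> 2" and "c2 \<ge> 2" and "prime d"
    and f_range: "\<forall>s1<c1. \<forall>s2<c2. f s1 s2 < d"
    and not_additive: "\<not> (\<exists>g1 g2 :: nat \<Rightarrow> nat.
          (\<forall>s1<c1. g1 s1 < d) \<and> (\<forall>s2<c2. g2 s2 < d) \<and>
          (\<forall>s1<c1. \<forall>s2<c2. f s1 s2 = (g1 s1 + g2 s2) mod d))"
    and ns: "non_signaling d c1 c2 p"
    and win: "\<forall>s1<c1. \<forall>s2<c2.
          (\<Sum>(m1, m2) \<in> {(m1, m2). m1 < d \<and> m2 < d \<and> (m1 + m2) mod d = f s1 s2}.
             p m1 m2 s1 s2) = 1"
  shows "\<forall>s1<c1. \<forall>s2<c2. \<forall>m1<d. \<forall>m2<d.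
           p m1 m2 s1 s2 = (if (m1 + m2) mod d = f s1 s2 then 1 / real d else 0)"
  proof -
  have d0: "d > 0" using assms(3) prime_gt_0_nat by blast
  have cd: "cond_distr d c1 c2 p" using ns unfolding non_signaling_def by blast
  have nsA: "\<And>m1 s1 s2 s2'. m1 < d \<Longrightarrow> s1 < c1 \<Longrightarrow> s2 < c2 \<Longrightarrow> s2' < c2 \<Longrightarrow>
        (\<Sum>m2<d. p m1 m2 s1 s2) = (\<Sum>m2<d. p m1 m2 s1 s2')"
    using ns unfolding non_signaling_def by blast
  have nsB: "\<And>m2 s2 s1 s1'. m2 < d \<Longrightarrow> s2 < c2 \<Longrightarrow> s1 < c1 \<Longrightarrow> s1' < c1 \<Longrightarrow>
        (\<Sum>m1<d. p m1 m2 s1 s2) = (\<Sum>m1<d. p m1 m2 s1' s2)"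
    using ns unfolding non_signaling_def by blast
  have c10: "0 < c1" and c20: "0 < c2" using assms(1,2) by auto
  have Z: "p m1 m2 s1 s2 = 0" if h: "s1 < c1" "s2 < c2" "m1 < d" "m2 < d" "(m1 + m2) mod d \<noteq> f s1 s2"
    for s1 s2 m1 m2
  proof -
    let ?T = "{..<d} \<times> {..<d}"
    let ?W = "{(m1, m2). m1 < d \<and> m2 < d \<and> (m1 + m2) mod d = f s1 s2}"
    have nn: "\<forall>x\<in>?T. p (fst x) (snd x) s1 s2 \<ge> 0" using cd h unfolding cond_distr_def by auto
    have tot: "(\<Sum>(a, b)\<in>?T. p a b s1 s2) = 1"
      using cd h unfolding cond_distr_def by (simp add: sum.cartesian_product)
    have WT: "?W \<subseteq> ?T" by auto
    have fT: "finite ?T" by simp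
    have "(\<Sum>(a, b)\<in>?T. p a b s1 s2) = (\<Sum>(a, b)\<in>?W. p a b s1 s2) + (\<Sum>(a, b)\<in>?T - ?W. p a b s1 s2)"
      using sum.subset_diff[OF WT fT] by (simp add: add.commute)
    hence rest: "(\<Sum>(a, b)\<in>?T - ?W. p a b s1 s2) = 0" using tot win h by simp
    have "\<forall>x\<in>?T - ?W. (case x of (a, b) \<Rightarrow> p a b s1 s2) = 0"
      using sum_nonneg_eq_0_iff[of "?T - ?W" "\<lambda>x. case x of (a, b) \<Rightarrow> p a b s1 s2"] rest nn
      by (auto simp: split_beta)
    moreover have "(m1, m2) \<in> ?T - ?W" using h by auto
    ultimately have "(case (m1, m2) of (a, b) \<Rightarrow> p a b s1 s2) = 0" by blast
    thus ?thesis by simp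
  qed
  define A where "A s1 m1 = (\<Sum>m2<d. p m1 m2 s1 0)" for s1 m1
  define B where "B s2 m2 = (\<Sum>m1<d. p m1 m2 0 s2)" for s2 m2
  have Aeq: "A s1 m1 = p m1 ((f s1 s2 + d - m1) mod d) s1 s2"
    if h: "s1 < c1" "s2 < c2" "m1 < d" for s1 s2 m1
  proof -
    let ?r = "(f s1 s2 + d - m1) mod d"
    have "A s1 m1 = (\<Sum>m2<d. p m1 m2 s1 s2)" unfolding A_def using nsA h c20 by metis
    also have "\<dots> = (\<Sum>m2\<in>{?r}. p m1 m2 s1 s2)"
    proof (rule sum.mono_neutral_right)
      show "finite {..<d}" by simp
      show "{?r} \<subseteq> {..<d}" using d0 by simp
      show "\<forall>i\<in>{..<d} - {?r}. p m1 i s1 s2 = 0"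
        using Z h uniq f_range by (metis DiffE lessThan_iff singletonI)
    qed
    finally show ?thesis by simp
  qed
  have Beq: "B s2 m2 = p ((f s1 s2 + d - m2) mod d) m2 s1 s2"
    if h: "s1 < c1" "s2 < c2" "m2 < d" for s1 s2 m2
  proof -
    let ?r = "(f s1 s2 + d - m2) mod d"
    have "B s2 m2 = (\<Sum>m1<d. p m1 m2 s1 s2)" unfolding B_def using nsB h c10 by metis
    also have "\<dots> = (\<Sum>m1\<in>{?r}. p m1 m2 s1 s2)"
    proof (rule sum.mono_neutral_right)
      show "finite {..<d}" by simp
      show "{?r} \<subseteq> {..<d}" using d0 by simp
      show "\<forall>i\<in>{..<d} - {?r}. p i m2 s1 s2 = 0"
        using Z h uniq f_range by (metis DiffE lessThan_iff singletonI add.commute)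
    qed
    finally show ?thesis by simp
  qed
  have AB: "A s1 m1 = B s2 ((f s1 s2 + d - m1) mod d)"
    if h: "s1 < c1" "s2 < c2" "m1 < d" for s1 s2 m1
  proof -
    let ?r = "(f s1 s2 + d - m1) mod d"
    have r: "?r < d" using d0 by simp
    have fl: "f s1 s2 < d" using f_range h by simp
    have "(m1 + ?r) mod d = f s1 s2" using uniq[OF h(3) r fl] by simp
    hence "(?r + m1) mod d = f s1 s2" by (simp only: add.commute)
    hence "m1 = (f s1 s2 + d - ?r) mod d" using uniq[OF r h(3) fl] by blast
    thus ?thesis using Aeq[OF h] Beq[OF h(1,2) r] by simp
  qed
  define a where "a s1 x = A s1 (nat (x mod int d))" for s1 x
  define b where "b s2 x = B s2 (nat (x mod int d))" for s2 x
  define F where "F s1 s2 = int (f s1 s2)" for s1 s2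
  have amod: "a s x = a s (x mod int d)" for s x unfolding a_def by simp
  have ab: "a s1 x = b s2 (F s1 s2 - x)" if h: "s1 < c1" "s2 < c2" for s1 s2 x
  proof -
    have lt: "nat (x mod int d) < d" using d0 by (simp add: nat_less_iff)
    show ?thesis unfolding a_def b_def F_def
      using AB[OF h lt] shiftidx[of "f s1 s2" d x] f_range h by simp
  qed
  have shift: "a s1' y = a s1 (F s1 s2 - F s1' s2 + y)" if h: "s1 < c1" "s1' < c1" "s2 < c2" for s1 s1' s2 y
    using ab[OF h(2,3), of y] ab[OF h(1,3), of "F s1 s2 - F s1' s2 + y"] by simp
  \<comment> \<open>non-additivity gives a nonzero twist\<close>
  obtain t1 t2 where t: "t1 < c1" "t2 < c2"
    and tw: "(F t1 t2 - F 0 t2 - F t1 0 + F 0 0) mod int d \<noteq> 0"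
  proof -
    have "\<exists>t1<c1. \<exists>t2<c2. (F t1 t2 - F 0 t2 - F t1 0 + F 0 0) mod int d \<noteq> 0"
    proof (rule ccontr)
      assume "\<not> ?thesis"
      hence all: "\<And>t1 t2. t1 < c1 \<Longrightarrow> t2 < c2 \<Longrightarrow> (F t1 t2 - F 0 t2 - F t1 0 + F 0 0) mod int d = 0"
        by blast
      define g1 where "g1 s1 = f s1 0" for s1
      define g2 where "g2 s2 = (f 0 s2 + d - f 0 0) mod d" for s2
      have "\<forall>s1<c1. g1 s1 < d" unfolding g1_def using f_range c20 by simp
      moreover have "\<forall>s2<c2. g2 s2 < d" unfolding g2_def using d0 by simp
      moreover have "\<forall>s1<c1. \<forall>s2<c2. f s1 s2 = (g1 s1 + g2 s2) mod d"
      proof (intro allI impI)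
        fix s1 s2 assume h: "s1 < c1" "s2 < c2"
        have f00: "f 0 0 < d" using f_range c10 c20 by simp
        have "int ((g1 s1 + g2 s2) mod d) = (F s1 0 + (F 0 s2 + int d - F 0 0) mod int d) mod int d"
          unfolding g1_def g2_def F_def using f00 by (simp add: of_nat_mod of_nat_diff)
        also have "\<dots> = (F s1 0 + F 0 s2 - F 0 0) mod int d"
          by (metis add.commute add_diff_eq mod_add_right_eq mod_add_self2)
        also have "\<dots> = F s1 s2 mod int d"
        proof -
          have "int d dvd (F s1 s2 - F 0 s2 - F s1 0 + F 0 0)" using all[OF h] by (simp add: dvd_eq_mod_eq_0)
          moreover have "F s1 s2 - F 0 s2 - F s1 0 + F 0 0 = F s1 s2 - (F s1 0 + F 0 s2 - F 0 0)" by simp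
          ultimately have "int d dvd (F s1 s2 - (F s1 0 + F 0 s2 - F 0 0))" by simp
          thus ?thesis using mod_eq_dvd_iff[of "F s1 s2" "int d" "F s1 0 + F 0 s2 - F 0 0"] by simp
        qed
        also have "\<dots> = F s1 s2" unfolding F_def using f_range h by simp
        finally show "f s1 s2 = (g1 s1 + g2 s2) mod d" unfolding F_def by linarith
      qed
      ultimately show False using not_additive by blast
    qed
    thus ?thesis using that by blast
  qed
  define \<delta> where "\<delta> = F t1 t2 - F 0 t2 - F t1 0 + F 0 0"
  have cop: "coprime \<delta> (int d)"
  proof -
    have "prime (int d)" using assms(3) by simp
    moreover have "\<not> int d dvd \<delta>" using tw unfolding \<delta>_def by (simp add: dvd_eq_mod_eq_0)
    ultimately show ?thesis using prime_imp_coprime[of "int d" \<delta>] coprime_commute by blast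
  qed
  have per: "a t1 z = a t1 (z + \<delta>)" for z
  proof -
    define y where "y = z - (F t1 0 - F 0 0)"
    have "a 0 y = a t1 (F t1 t2 - F 0 t2 + y)" using shift[OF t(1) c10 t(2)] .
    moreover have "a 0 y = a t1 (F t1 0 - F 0 0 + y)" using shift[OF t(1) c10 c20] .
    ultimately show ?thesis unfolding y_def \<delta>_def by (simp add: algebra_simps)
  qed
  have const_t: "a t1 x = a t1 0" for x
    using periodic_const[of "int d" "a t1" \<delta> x] d0 amod per cop by simp
  have const: "a s x = a t1 0" if "s < c1" for s x
    using shift[OF t(1) that c20, of x] const_t by simp
  have sumA: "(\<Sum>m<d. A 0 m) = 1"
    using cd c10 c20 unfolding cond_distr_def A_def by simp
  have Am: "A s m = a t1 0" if "s < c1" "m < d" for s m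
    using const[OF that(1), of "int m"] that unfolding a_def by simp
  have "(\<Sum>m<d. A 0 m) = real d * a t1 0" using Am[OF c10] by simp
  hence val: "a t1 0 = 1 / real d" using sumA d0 by (simp add: field_simps)
  show ?thesis
  proof (intro allI impI)
    fix s1 s2 m1 m2 assume h: "s1 < c1" "s2 < c2" "m1 < d" "m2 < d"
    show "p m1 m2 s1 s2 = (if (m1 + m2) mod d = f s1 s2 then 1 / real d else 0)"
    proof (cases "(m1 + m2) mod d = f s1 s2")
      case True
      hence "m2 = (f s1 s2 + d - m1) mod d" using uniq h f_range by blast
      hence "p m1 m2 s1 s2 = A s1 m1" using Aeq h by simp
      thus ?thesis using True Am h val by simp
    next
      case False
      thus ?thesis using Z h by simp
    qed
  qed
qed

end
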